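(* Let $a\ge6$ and $n\ge1$ be integers and let $P_{0,n}$, $P_{l,n}$ be as in the context. Then for every $l\in\{1,\dots,a\}$, $$2d_n^{a-l}P_{l,n}(z)\in\mathbb{Z}[z]\qquad\text{and}\qquad 2d_n^{a+2}P_{0,n}(z)\in\mathbb{Z}[z],$$ where $d_n=\mathrm{lcm}(1,2,\dots,n)$.
   Context: Fix an integer $a\ge 6$. For complex $x$ and integer $m\ge0$, $(x)_m=x(x+1)\cdots(x+m-1)$. For an integer $n\ge1$ define $$R_n(t)=n!^{a-6}\left(t+\frac n2\right)\frac{(t-n)_n^3\,(t+n+1)_n^3}{(t)_{n+1}^a}.$$ Let $D_\lambda=\frac1{\lambda!}\left(\frac{d}{dt}\right)^\lambda$ and, for $l\in\{1,\dots,a\}$, $j\in\{0,\dots,n\}$, put $c_{l,j,n}=D_{a-l}\big(R_n(t)(t+j)^a\big)\big|_{t=-j}$. Define $$P_{0,n}(z)=-\sum_{l=1}^a\sum_{j=1}^n\sum_{k=1}^{j}\frac{l(l+1)\,c_{l,j,n}}{2k^{l+2}}z^{j-k},\qquad P_{l,n}(z)=\sum_{j=0}^n c_{l,j,n}z^j\quad(1\le l\le a).$$ *)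

theory Defs
  imports "HOL-Analysis.Analysis" "HOL-Computational_Algebra.Polynomial"
begin

text \<open>R_n(t), as a complex function (poles at t = 0,-1,...,-n, where HOL division gives 0).\<close>
definition R :: "nat \<Rightarrow> nat \<Rightarrow> complex \<Rightarrow> complex" where
  "R a n t = of_nat (fact n) ^ (a - 6) * (t + of_nat n / 2)
     * pochhammer (t - of_nat n) n ^ 3 * pochhammer (t + of_nat n + 1) n ^ 3
     / pochhammer t (n + 1) ^ a"

text \<open>t \<mapsto> R_n(t)(t+j)^a, extended to t = -j by its limit (removable singularity).\<close>
definition Rj :: "nat \<Rightarrow> nat \<Rightarrow> nat \<Rightarrow> complex \<Rightarrow> complex" where
  "Rj a n j t = (if t = - of_nat j
      then Lim (at (- of_nat j)) (\<lambda>s. R a n s * (s + of_nat j) ^ a)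
      else R a n t * (t + of_nat j) ^ a)"

definition Dop :: "nat \<Rightarrow> (complex \<Rightarrow> complex) \<Rightarrow> complex \<Rightarrow> complex" where
  "Dop lam f x = (deriv ^^ lam) f x / of_nat (fact lam)"

definition c :: "nat \<Rightarrow> nat \<Rightarrow> nat \<Rightarrow> nat \<Rightarrow> complex" where
  "c a l j n = Dop (a - l) (Rj a n j) (- of_nat j)"

definition P0 :: "nat \<Rightarrow> nat \<Rightarrow> complex poly" where
  "P0 a n = - (\<Sum>l=1..a. \<Sum>j=1..n. \<Sum>k=1..j.
      monom (of_nat (l * (l + 1)) * c a l j n / (2 * of_nat k ^ (l + 2))) (j - k))"

definition Pl :: "nat \<Rightarrow> nat \<Rightarrow> nat \<Rightarrow> complex poly" where
  "Pl a l n = (\<Sum>j=0..n. monom (c a l j n) j)"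

definition d :: "nat \<Rightarrow> nat" where
  "d n = Lcm {1..n}"

definition int_poly :: "complex poly \<Rightarrow> bool" where
  "int_poly p \<longleftrightarrow> (\<forall>i. coeff p i \<in> \<int>)"

end

theory Submission imports Defs "HOL-Complex_Analysis.Complex_Analysis" begin

definition good :: "nat \<Rightarrow> complex \<Rightarrow> (complex \<Rightarrow> complex) \<Rightarrow> bool" where
  "good n x f \<longleftrightarrow> f analytic_on {x} \<and>
     (\<forall>m. of_nat (d n) ^ m * (deriv ^^ m) f x / fact m \<in> \<int>)"

lemma good_const: "z \<in> \<int> \<Longrightarrow> good n x (\<lambda>_. z)"
  unfolding good_def by auto

lemma good_ident: "x \<in> \<int> \<Longrightarrow> good n x (\<lambda>t. t)"
  unfolding good_def by auto

lemma good_add: "good n x f \<Longrightarrow> good n x g \<Longrightarrow> good n x (\<lambda>t. f t + g t)"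
  unfolding good_def
  by (auto simp: higher_deriv_add_at add_divide_distrib distrib_left intro: analytic_on_add)

lemma good_mult: assumes "good n x f" "good n x g" shows "good n x (\<lambda>t. f t * g t)"
proof -
  have af: "f analytic_on {x}" and ag: "g analytic_on {x}" using assms unfolding good_def by auto
  show ?thesis unfolding good_def
  proof (intro conjI allI)
    show "(\<lambda>t. f t * g t) analytic_on {x}" using af ag by (rule analytic_on_mult)
    fix m
    have "of_nat (d n) ^ m * (deriv ^^ m) (\<lambda>t. f t * g t) x / fact m
       = (\<Sum>i = 0..m. (of_nat (d n) ^ i * (deriv ^^ i) f x / fact i) *
            (of_nat (d n) ^ (m - i) * (deriv ^^ (m - i)) g x / fact (m - i)))"
      unfolding higher_deriv_mult_at[OF af ag] sum_distrib_left sum_divide_distrib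
    proof (intro sum.cong refl)
      fix i assume "i \<in> {0..m}"
      then have im: "i \<le> m" by auto
      have "(of_nat (m choose i) :: complex) = fact m / (fact i * fact (m - i))"
        using binomial_fact[OF im] by simp
      moreover have "(of_nat (d n) :: complex) ^ m = of_nat (d n) ^ i * of_nat (d n) ^ (m - i)"
        using im by (simp flip: power_add)
      ultimately show "of_nat (d n) ^ m * (of_nat (m choose i) * (deriv ^^ i) f x * (deriv ^^ (m - i)) g x) / fact m =
         of_nat (d n) ^ i * (deriv ^^ i) f x / fact i * (of_nat (d n) ^ (m - i) * (deriv ^^ (m - i)) g x / fact (m - i))"
        by (simp add: field_simps)
    qed
    also have "\<dots> \<in> \<int>" using assms unfolding good_def by (intro Ints_sum Ints_mult) auto
    finally show "of_nat (d n) ^ m * (deriv ^^ m) (\<lambda>t. f t * g t) x / fact m \<in> \<int>" .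
  qed
qed

lemma good_power: "good n x f \<Longrightarrow> good n x (\<lambda>t. f t ^ k)"
proof (induction k)
  case 0 then show ?case by (simp add: good_const)
next
  case (Suc k) then show ?case using good_mult[of n x f "\<lambda>t. f t ^ k"] by simp
qed

lemma good_sum: "finite A \<Longrightarrow> (\<And>i. i \<in> A \<Longrightarrow> good n x (f i)) \<Longrightarrow> good n x (\<lambda>t. \<Sum>i\<in>A. f i t)"
proof (induction A rule: finite_induct)
  case empty then show ?case by (simp add: good_const)
next
  case (insert a A) then show ?case using good_add[of n x "f a" "\<lambda>t. \<Sum>i\<in>A. f i t"] by simp
qed

lemma good_cong: "good n x f \<Longrightarrow> eventually (\<lambda>t. f t = g t) (nhds x) \<Longrightarrow> good n x g"
  unfolding good_def
  by (metis analytic_at_cong higher_deriv_cong_ev)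


lemma higher_deriv_inverse_shift:
  fixes w z :: complex
  assumes "z + w \<noteq> 0"
  shows "(deriv ^^ m) (\<lambda>t. inverse (t + w)) z = (-1) ^ m * fact m * inverse (z + w) ^ Suc m"
  using assms
proof (induction m arbitrary: z)
  case 0 then show ?case by simp
next
  case (Suc m z)
  have ev: "eventually (\<lambda>t. t + w \<noteq> 0) (nhds z)"
  proof -
    have "open {t. t + w \<noteq> 0}" by (intro open_Collect_neq continuous_intros)
    then show ?thesis using eventually_nhds_in_open[of "{t. t + w \<noteq> 0}" z] Suc.prems by simp
  qed
  have "(deriv ^^ Suc m) (\<lambda>t. inverse (t + w)) z = deriv ((deriv ^^ m) (\<lambda>t. inverse (t + w))) z"
    by simp
  also have "\<dots> = deriv (\<lambda>t. (-1) ^ m * fact m * inverse (t + w) ^ Suc m) z"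
    by (intro deriv_cong_ev refl eventually_mono[OF ev]) (use Suc.IH in auto)
  also have "\<dots> = (-1) ^ Suc m * fact (Suc m) * inverse (z + w) ^ Suc (Suc m)"
  proof (rule DERIV_imp_deriv)
    show "((\<lambda>t. (-1) ^ m * fact m * inverse (t + w) ^ Suc m) has_field_derivative
       (-1) ^ Suc m * fact (Suc m) * inverse (z + w) ^ Suc (Suc m)) (at z)"
      apply (rule derivative_eq_intros refl | use Suc.prems in simp)+
      done
  qed
  finally show ?case .
qed

lemma dvd_d: "k \<in> {1..n} \<Longrightarrow> k dvd d n"
  unfolding d_def by (rule dvd_Lcm) 

lemma good_basic:
  fixes j k n :: nat
  assumes "j \<le> n" "k \<le> n" "k \<noteq> j"
  shows "good n (- of_nat j) (\<lambda>t. (t + of_nat j) / (t + of_nat k))"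
proof -
  define x :: complex where "x = - of_nat j"
  have xk: "x + of_nat k \<noteq> 0" using assms unfolding x_def
    by (metis add.commute add_diff_cancel_left' diff_add_cancel neg_eq_iff_add_eq_0 of_nat_eq_iff uminus_add_conv_diff)
  have "nat \<bar>int k - int j\<bar> dvd d n"
    using assms by (intro dvd_d) auto
  then have "\<bar>int k - int j\<bar> dvd int (d n)"
    by (metis abs_ge_zero int_dvd_int_iff int_nat_eq)
  then have "(int k - int j) dvd int (d n)" by simp
  then obtain q where q: "int (d n) = (int k - int j) * q" by (elim dvdE)
  have qc: "(of_nat (d n) :: complex) = (of_nat k - of_nat j) * of_int q"
    using arg_cong[OF q, of "of_int :: int \<Rightarrow> complex"] by simp
  have kj: "(of_nat k - of_nat j :: complex) \<noteq> 0" using assms by simp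
  have an: "(\<lambda>t. inverse (t + of_nat k)) analytic_on {x}"
    using xk by (intro analytic_intros) auto
  have g1: "good n x (\<lambda>t. (of_nat j - of_nat k) * inverse (t + of_nat k))"
    unfolding good_def
  proof (intro conjI allI)
    show "(\<lambda>t. (of_nat j - of_nat k) * inverse (t + of_nat k)) analytic_on {x}"
      using an xk by (intro analytic_intros) auto
    fix m
    have "of_nat (d n) ^ m * (deriv ^^ m) (\<lambda>t. (of_nat j - of_nat k) * inverse (t + of_nat k)) x / fact m
       = of_nat (d n) ^ m * ((of_nat j - of_nat k) * ((-1) ^ m * fact m * inverse (x + of_nat k) ^ Suc m)) / fact m"
      by (simp add: higher_deriv_cmult'[OF an] higher_deriv_inverse_shift[OF xk])
    also have "\<dots> = - ((-1) ^ m * of_int q ^ m)"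
    proof -
      define u :: complex where "u = of_nat k - of_nat j"
      have u0: "u \<noteq> 0" using kj u_def by simp
      have e1: "x + of_nat k = u" "of_nat j - of_nat k = - u" unfolding u_def x_def by simp_all
      have f0: "(fact m :: complex) \<noteq> 0" by simp
      have "(u * of_int q) ^ m * (- u * ((-1) ^ m * fact m * inverse u ^ Suc m)) / fact m
          = - ((-1) ^ m * of_int q ^ m)"
        using u0 f0 by (simp add: power_mult_distrib field_simps)
      then show ?thesis unfolding qc e1 u_def[symmetric] .
    qed
    also have "\<dots> \<in> \<int>" by simp
    finally show "of_nat (d n) ^ m * (deriv ^^ m) (\<lambda>t. (of_nat j - of_nat k) * inverse (t + of_nat k)) x / fact m \<in> \<int>" .
  qed
  have "good n x (\<lambda>t. 1 + (of_nat j - of_nat k) * inverse (t + of_nat k))"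
    using good_add[OF good_const[of 1] g1] by simp
  moreover have "eventually (\<lambda>t. 1 + (of_nat j - of_nat k) * inverse (t + of_nat k) = (t + of_nat j) / (t + of_nat k)) (nhds x)"
  proof -
    have "open {t. t + of_nat k \<noteq> (0::complex)}" by (intro open_Collect_neq continuous_intros)
    then have "eventually (\<lambda>t. t + of_nat k \<noteq> (0::complex)) (nhds x)"
      using eventually_nhds_in_open[of "{t. t + of_nat k \<noteq> (0::complex)}" x] xk by simp
    then show ?thesis by eventually_elim (simp add: field_simps)
  qed
  ultimately show ?thesis unfolding x_def by (rule good_cong)
qed


definition PA :: "complex poly \<Rightarrow> nat \<Rightarrow> nat \<Rightarrow> complex" where
  "PA P n k = poly P (- of_nat k) / (\<Prod>i\<in>{0..n}-{k}. (of_nat i - of_nat k))"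

lemma prod_nonzero_diff: "k \<le> n \<Longrightarrow> (\<Prod>i\<in>{0..n}-{k}. (of_nat i - of_nat k :: complex)) \<noteq> 0"
  by (auto simp: prod_zero_iff)

lemma partial_fraction:
  fixes P :: "complex poly" and t :: complex
  assumes deg: "degree P \<le> n" and t: "\<And>i. i \<le> n \<Longrightarrow> t + of_nat i \<noteq> 0"
  shows "poly P t / pochhammer t (Suc n) = (\<Sum>k=0..n. PA P n k / (t + of_nat k))"
proof -
  define Q where "Q = (\<Sum>k=0..n. smult (PA P n k) (\<Prod>i\<in>{0..n}-{k}. [:of_nat i, 1:]))"
  have degQ: "degree Q \<le> n"
    unfolding Q_def
  proof (intro degree_sum_le, simp, rule order.trans[OF degree_smult_le])
    fix k assume k: "k \<in> {0..n}"
    have "degree (\<Prod>i\<in>{0..n}-{k}. [:of_nat i, 1:] :: complex poly) \<le> (\<Sum>i\<in>{0..n}-{k}. degree ([:of_nat i, 1:] :: complex poly))"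
      using degree_prod_sum_le[of "{0..n}-{k}" "\<lambda>i. [:of_nat i, 1:] :: complex poly"] by (simp add: o_def)
    also have "\<dots> = card ({0..n}-{k})" by simp
    also have "\<dots> = n" using k by simp
    finally show "degree (\<Prod>i\<in>{0..n}-{k}. [:of_nat i, 1:] :: complex poly) \<le> n" .
  qed
  have polyQ: "poly Q (- of_nat m) = poly P (- of_nat m)" if m: "m \<le> n" for m
  proof -
    have "poly Q (- of_nat m) = (\<Sum>k=0..n. PA P n k * (\<Prod>i\<in>{0..n}-{k}. (of_nat i - of_nat m)))"
      unfolding Q_def by (simp add: poly_sum poly_prod)
    also have "\<dots> = (\<Sum>k\<in>{m}. PA P n k * (\<Prod>i\<in>{0..n}-{k}. (of_nat i - of_nat m)))"
    proof (rule sum.mono_neutral_right)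
      show "finite {0..n}" by simp
      show "{m} \<subseteq> {0..n}" using m by simp
      show "\<forall>k\<in>{0..n} - {m}. PA P n k * (\<Prod>i\<in>{0..n} - {k}. (of_nat i - of_nat m :: complex)) = 0"
      proof
        fix k assume "k \<in> {0..n} - {m}"
        then have "m \<in> {0..n}-{k}" using m by auto
        then have "(\<Prod>i\<in>{0..n} - {k}. (of_nat i - of_nat m :: complex)) = 0"
          by (intro prod_zero) auto
        then show "PA P n k * (\<Prod>i\<in>{0..n} - {k}. (of_nat i - of_nat m :: complex)) = 0" by simp
      qed
    qed
    also have "\<dots> = PA P n m * (\<Prod>i\<in>{0..n}-{m}. (of_nat i - of_nat m))" by (simp only: sum.insert_if finite.emptyI empty_iff if_False sum.empty add_0_right)
    also have "\<dots> = poly P (- of_nat m)"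
      unfolding PA_def using prod_nonzero_diff[OF m] by simp
    finally show ?thesis .
  qed
  have PQ: "P = Q"
  proof (rule poly_eqI_degree[of "(\<lambda>m. - of_nat m) ` {0..n}"])
    fix x assume "x \<in> (\<lambda>m. - of_nat m :: complex) ` {0..n}"
    then show "poly P x = poly Q x" using polyQ by auto
  next
    have "card ((\<lambda>m. - of_nat m :: complex) ` {0..n}) = Suc n"
      by (subst card_image) (auto simp: inj_on_def)
    then show "degree P < card ((\<lambda>m. - of_nat m :: complex) ` {0..n})"
       "degree Q < card ((\<lambda>m. - of_nat m :: complex) ` {0..n})" using deg degQ by auto
  qed
  have poch: "pochhammer t (Suc n) = (\<Prod>i\<in>{0..n}. (t + of_nat i))"
    by (simp add: pochhammer_prod atLeastLessThanSuc_atLeastAtMost)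
  have "poly P t / pochhammer t (Suc n)
      = (\<Sum>k=0..n. PA P n k * (\<Prod>i\<in>{0..n}-{k}. (t + of_nat i)) / (\<Prod>i\<in>{0..n}. (t + of_nat i)))"
  proof -
    have lin: "\<And>i. poly [:of_nat i, 1:] t = t + of_nat i" by simp
    have "poly Q t = (\<Sum>k=0..n. PA P n k * (\<Prod>i\<in>{0..n}-{k}. (t + of_nat i)))"
      unfolding Q_def by (simp only: poly_sum poly_smult poly_prod lin)
    then show ?thesis unfolding PQ poch by (simp only: sum_divide_distrib)
  qed
  also have "\<dots> = (\<Sum>k=0..n. PA P n k / (t + of_nat k))"
  proof (rule sum.cong[OF refl])
    fix k assume k: "k \<in> {0..n}"
    have "(\<Prod>i\<in>{0..n}. (t + of_nat i)) = (t + of_nat k) * (\<Prod>i\<in>{0..n}-{k}. (t + of_nat i))"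
      using k by (simp add: prod.remove)
    moreover have "(\<Prod>i\<in>{0..n}-{k}. (t + of_nat i)) \<noteq> 0" using t by (auto simp: prod_zero_iff)
    moreover have "t + of_nat k \<noteq> 0" using t k by auto
    ultimately show "PA P n k * (\<Prod>i\<in>{0..n}-{k}. (t + of_nat i)) / (\<Prod>i\<in>{0..n}. (t + of_nat i)) = PA P n k / (t + of_nat k)"
      by (metis nonzero_mult_divide_mult_cancel_right)
  qed
  finally show ?thesis .
qed

lemma prod_diff_fact:
  assumes k: "k \<le> n"
  shows "(\<Prod>i\<in>{0..n}-{k}. (of_nat i - of_nat k :: complex)) = (-1) ^ k * fact k * fact (n - k)"
proof -
  have split: "{0..n}-{k} = {0..<k} \<union> (\<lambda>m. m + Suc k) ` {0..<n-k}"
  proof (intro equalityI subsetI)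
    fix i assume i: "i \<in> {0..n}-{k}"
    show "i \<in> {0..<k} \<union> (\<lambda>m. m + Suc k) ` {0..<n-k}"
    proof (cases "i < k")
      case False
      then have "i = (i - Suc k) + Suc k" "i - Suc k \<in> {0..<n-k}" using i by auto
      then show ?thesis by blast
    qed simp
  qed (use k in auto)
  have "(\<Prod>i\<in>{0..n}-{k}. (of_nat i - of_nat k :: complex))
      = (\<Prod>i\<in>{0..<k}. (of_nat i - of_nat k)) * (\<Prod>i\<in>(\<lambda>m. m + Suc k) ` {0..<n-k}. (of_nat i - of_nat k))"
    unfolding split by (rule prod.union_disjoint) auto
  also have "(\<Prod>i\<in>{0..<k}. (of_nat i - of_nat k :: complex)) = pochhammer (- of_nat k) k"
    by (simp add: pochhammer_prod)
  also have "\<dots> = (-1) ^ k * fact k"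
    by (simp add: pochhammer_minus pochhammer_fact)
  also have "(\<Prod>i\<in>(\<lambda>m. m + Suc k) ` {0..<n-k}. (of_nat i - of_nat k :: complex)) = pochhammer 1 (n - k)"
    by (subst prod.reindex) (auto simp: inj_on_def pochhammer_prod algebra_simps)
  also have "\<dots> = fact (n - k)" by (simp add: pochhammer_fact)
  finally show ?thesis by simp
qed

lemma poch_fact_Ints: "(x :: complex) \<in> \<int> \<Longrightarrow> pochhammer x m / fact m \<in> \<int>"
proof -
  assume "x \<in> \<int>"
  then obtain b where b: "x = of_int b" by (auto elim: Ints_cases)
  obtain r where r: "pochhammer b m = fact m * r" using fact_dvd_pochhammer[of m b] by (elim dvdE)
  have "pochhammer x m / fact m = of_int r"
    unfolding b pochhammer_of_int r by simp
  then show ?thesis by simp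
qed

lemma PA_Ints:
  assumes k: "k \<le> n" and h: "poly P (- of_nat k) / fact n \<in> \<int>"
  shows "PA P n k \<in> \<int>"
proof -
  have "PA P n k = (-1) ^ k * of_nat (n choose k) * (poly P (- of_nat k) / fact n)"
    unfolding PA_def prod_diff_fact[OF k] binomial_fact[OF k]
    by (simp add: field_simps)
  also have "\<dots> \<in> \<int>"
  proof -
    have "(-1) ^ k * of_nat (n choose k) \<in> (\<int> :: complex set)"
      by (intro Ints_mult Ints_power Ints_minus Ints_1 Ints_of_nat)
    from Ints_mult[OF this h] show ?thesis .
  qed
  finally show ?thesis .
qed


lemma near_not_pole:
  fixes t :: complex and i j :: nat
  assumes "norm (t + of_nat j) < 1/2" "t \<noteq> - of_nat j"
  shows "t + of_nat i \<noteq> 0"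
proof
  assume h: "t + of_nat i = 0"
  then have ij: "i \<noteq> j" using assms(2) by (auto simp: eq_neg_iff_add_eq_0)
  have "t + of_nat j = of_int (int j - int i)" using h by (simp add: eq_neg_iff_add_eq_0 algebra_simps)
  then have "norm (t + of_nat j) = \<bar>real_of_int (int j - int i)\<bar>"
    by (simp only: norm_of_int)
  moreover have "\<bar>int j - int i\<bar> \<ge> 1" using ij by auto
  ultimately have "norm (t + of_nat j) \<ge> 1"
    by (metis of_int_1_le_iff of_int_abs)
  then show False using assms(1) by simp
qed

lemma good_pf:
  fixes P :: "complex poly" and j n :: nat
  assumes deg: "degree P \<le> n" and j: "j \<le> n"
    and ints: "\<And>k. k \<le> n \<Longrightarrow> poly P (- of_nat k) / fact n \<in> \<int>"
  shows "good n (- of_nat j) (\<lambda>t. PA P n j + (\<Sum>k\<in>{0..n}-{j}. PA P n k * ((t + of_nat j) / (t + of_nat k))))"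
    and "\<And>t. norm (t + of_nat j) < 1/2 \<Longrightarrow> t \<noteq> - of_nat j \<Longrightarrow>
       PA P n j + (\<Sum>k\<in>{0..n}-{j}. PA P n k * ((t + of_nat j) / (t + of_nat k)))
        = (t + of_nat j) * poly P t / pochhammer t (Suc n)"
proof -
  have PAi: "k \<le> n \<Longrightarrow> PA P n k \<in> \<int>" for k using PA_Ints ints by blast
  show "good n (- of_nat j) (\<lambda>t. PA P n j + (\<Sum>k\<in>{0..n}-{j}. PA P n k * ((t + of_nat j) / (t + of_nat k))))"
    using j
    by (intro good_add good_const good_sum good_mult good_basic PAi) auto
next
  fix t :: complex
  assume t: "norm (t + of_nat j) < 1/2" "t \<noteq> - of_nat j"
  have np: "\<And>i. i \<le> n \<Longrightarrow> t + of_nat i \<noteq> 0" using near_not_pole[OF t] by blast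
  have tj: "t + of_nat j \<noteq> 0" using np j by blast
  have "(t + of_nat j) * poly P t / pochhammer t (Suc n) = (t + of_nat j) * (poly P t / pochhammer t (Suc n))"
    by simp
  also have "\<dots> = (\<Sum>k=0..n. PA P n k * ((t + of_nat j) / (t + of_nat k)))"
  proof -
    have pf: "poly P t / pochhammer t (Suc n) = (\<Sum>k=0..n. PA P n k / (t + of_nat k))"
      by (rule partial_fraction[OF deg np])
    show ?thesis unfolding pf sum_distrib_left by (intro sum.cong) auto
  qed
  also have "\<dots> = PA P n j * ((t + of_nat j) / (t + of_nat j)) + (\<Sum>k\<in>{0..n}-{j}. PA P n k * ((t + of_nat j) / (t + of_nat k)))"
    using j by (subst sum.remove[of _ j]) auto
  also have "\<dots> = PA P n j + (\<Sum>k\<in>{0..n}-{j}. PA P n k * ((t + of_nat j) / (t + of_nat k)))"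
    using tj by simp
  finally show "PA P n j + (\<Sum>k\<in>{0..n}-{j}. PA P n k * ((t + of_nat j) / (t + of_nat k)))
        = (t + of_nat j) * poly P t / pochhammer t (Suc n)" by simp
qed


lemma degree_prod_lin: "degree (\<Prod>i<n. [:f i, 1:] :: complex poly) \<le> n"
proof -
  have "degree (\<Prod>i<n. [:f i, 1:] :: complex poly) \<le> (\<Sum>i<n. degree ([:f i, 1:] :: complex poly))"
    using degree_prod_sum_le[of "{..<n}" "\<lambda>i. [:f i, 1:] :: complex poly"] by (simp add: o_def)
  also have "\<dots> = n" by simp
  finally show ?thesis .
qed

lemma poly_prod_lin: "poly (\<Prod>i<n. [:f i, 1:] :: complex poly) t = (\<Prod>i<n. f i + t)"
  by (simp add: poly_prod)

definition P1 :: "nat \<Rightarrow> complex poly" where "P1 n = (\<Prod>i<n. [:of_nat i - of_nat n, 1:])"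
definition P2 :: "nat \<Rightarrow> complex poly" where "P2 n = (\<Prod>i<n. [:of_nat n + 1 + of_nat i, 1:])"
definition P3 :: "nat \<Rightarrow> complex poly" where "P3 n = [:fact n:]"

lemma P1_poly: "poly (P1 n) t = pochhammer (t - of_nat n) n"
  unfolding P1_def poly_prod_lin pochhammer_prod atLeast0LessThan
  by (intro prod.cong) (auto simp: algebra_simps)

lemma P2_poly: "poly (P2 n) t = pochhammer (t + of_nat n + 1) n"
  unfolding P2_def poly_prod_lin pochhammer_prod atLeast0LessThan
  by (intro prod.cong) (auto simp: algebra_simps)

lemma P3_poly: "poly (P3 n) t = fact n"
  unfolding P3_def by simp

lemma P_deg: "degree (P1 n) \<le> n" "degree (P2 n) \<le> n" "degree (P3 n) \<le> n"
  unfolding P1_def P2_def P3_def by (auto intro: degree_prod_lin)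

lemma P_ints: "poly (P1 n) (- of_nat k) / fact n \<in> \<int>" "poly (P2 n) (- of_nat k) / fact n \<in> \<int>"
   "poly (P3 n) (- of_nat k) / fact n \<in> \<int>"
  unfolding P1_poly P2_poly P3_poly by (auto intro!: poch_fact_Ints)


definition FF :: "complex poly \<Rightarrow> nat \<Rightarrow> nat \<Rightarrow> complex \<Rightarrow> complex" where
  "FF P n j t = PA P n j + (\<Sum>k\<in>{0..n}-{j}. PA P n k * ((t + of_nat j) / (t + of_nat k)))"

lemma FF_good: "degree P \<le> n \<Longrightarrow> j \<le> n \<Longrightarrow> (\<And>k. k \<le> n \<Longrightarrow> poly P (- of_nat k) / fact n \<in> \<int>)
   \<Longrightarrow> good n (- of_nat j) (FF P n j)"
  unfolding FF_def[abs_def] by (rule good_pf(1))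

lemma FF_eq: "degree P \<le> n \<Longrightarrow> j \<le> n \<Longrightarrow> (\<And>k. k \<le> n \<Longrightarrow> poly P (- of_nat k) / fact n \<in> \<int>) \<Longrightarrow> norm (t + of_nat j) < 1/2 \<Longrightarrow> t \<noteq> - of_nat j \<Longrightarrow>
   FF P n j t = (t + of_nat j) * poly P t / pochhammer t (Suc n)"
  unfolding FF_def by (rule good_pf(2))

definition HH :: "nat \<Rightarrow> nat \<Rightarrow> nat \<Rightarrow> complex \<Rightarrow> complex" where
  "HH a n j t = (2 * t + of_nat n) * FF (P1 n) n j t ^ 3 * FF (P2 n) n j t ^ 3 * FF (P3 n) n j t ^ (a - 6)"

lemma HH_good: "j \<le> n \<Longrightarrow> good n (- of_nat j) (HH a n j)"
proof -
  assume j: "j \<le> n"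
  have g1: "good n (- of_nat j) (FF (P1 n) n j)" by (rule FF_good[OF P_deg(1) j P_ints(1)])
  have g2: "good n (- of_nat j) (FF (P2 n) n j)" by (rule FF_good[OF P_deg(2) j P_ints(2)])
  have g3: "good n (- of_nat j) (FF (P3 n) n j)" by (rule FF_good[OF P_deg(3) j P_ints(3)])
  have g0: "good n (- of_nat j) (\<lambda>t. 2 * t + of_nat n)"
    by (intro good_add good_mult good_const good_ident) auto
  have "good n (- of_nat j) (\<lambda>t. (2 * t + of_nat n) * FF (P1 n) n j t ^ 3 * FF (P2 n) n j t ^ 3 * FF (P3 n) n j t ^ (a - 6))"
    by (intro good_mult good_power g0 g1 g2 g3)
  then show ?thesis unfolding HH_def[abs_def] .
qed

lemma RH_eq:
  assumes a6: "a \<ge> 6" and j: "j \<le> n" and t: "norm (t + of_nat j) < 1/2" "t \<noteq> - of_nat j"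
  shows "R a n t * (t + of_nat j) ^ a = HH a n j t / 2"
proof -
  obtain b where b: "a = b + 6" using a6 by (metis add.commute le_Suc_ex)
  have np: "\<And>i. t + of_nat i \<noteq> 0" using near_not_pole[OF t] by blast
  define q where "q = pochhammer t (Suc n)"
  have q0: "q \<noteq> 0" unfolding q_def pochhammer_prod using np by (auto simp: prod_zero_iff)
  define u where "u = t + of_nat j"
  define p1 where "p1 = pochhammer (t - of_nat n) n"
  define p2 where "p2 = pochhammer (t + of_nat n + 1) n"
  have e1: "FF (P1 n) n j t = u * p1 / q" unfolding u_def p1_def q_def
    using FF_eq[OF P_deg(1) j P_ints(1) t] P1_poly by simp
  have e2: "FF (P2 n) n j t = u * p2 / q" unfolding u_def p2_def q_def
    using FF_eq[OF P_deg(2) j P_ints(2) t] P2_poly by simp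
  have e3: "FF (P3 n) n j t = u * fact n / q" unfolding u_def q_def
    using FF_eq[OF P_deg(3) j P_ints(3) t] P3_poly by simp
  have "HH a n j t / 2 = (2 * t + of_nat n) / 2 * (u * p1 / q) ^ 3 * (u * p2 / q) ^ 3 * (u * fact n / q) ^ b"
    unfolding HH_def e1 e2 e3 b by simp
  also have "\<dots> = fact n ^ b * (t + of_nat n / 2) * p1 ^ 3 * p2 ^ 3 / q ^ (b + 6) * u ^ (b + 6)"
    using q0 by (simp add: power_mult_distrib power_divide power_add field_simps)
  also have "\<dots> = R a n t * (t + of_nat j) ^ a"
    unfolding R_def b u_def p1_def p2_def q_def by simp
  finally show ?thesis by simp
qed

lemma ev_ball: "eventually (\<lambda>t. norm (t + of_nat j) < (1/2::real)) (nhds (- of_nat j :: complex))"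
proof -
  have "eventually (\<lambda>t. t \<in> ball (- of_nat j :: complex) (1/2)) (nhds (- of_nat j))"
    by (intro eventually_nhds_in_open) auto
  then show ?thesis by eventually_elim (simp add: dist_norm norm_minus_commute add.commute)
qed

lemma Rj_eq:
  assumes a6: "a \<ge> 6" and j: "j \<le> n"
  shows "eventually (\<lambda>t. Rj a n j t = 1/2 * HH a n j t) (nhds (- of_nat j))"
proof -
  define x0 :: complex where "x0 = - of_nat j"
  have an: "HH a n j analytic_on {x0}" using HH_good[OF j] unfolding good_def x0_def by blast
  have lim: "Lim (at x0) (\<lambda>s. R a n s * (s + of_nat j) ^ a) = HH a n j x0 / 2"
  proof (rule tendsto_Lim)
    show "\<not> trivial_limit (at x0)" by (rule trivial_limit_at)
    have "isCont (\<lambda>s. HH a n j s / 2) x0" using analytic_at_imp_isCont[OF an] by (intro continuous_intros) auto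
    then have "((\<lambda>s. HH a n j s / 2) \<longlongrightarrow> HH a n j x0 / 2) (at x0)" by (rule isContD)
    moreover have "eventually (\<lambda>s. HH a n j s / 2 = R a n s * (s + of_nat j) ^ a) (at x0)"
      unfolding eventually_at_filter x0_def
      by (rule eventually_mono[OF ev_ball]) (use RH_eq[OF a6 j] in auto)
    ultimately show "((\<lambda>s. R a n s * (s + of_nat j) ^ a) \<longlongrightarrow> HH a n j x0 / 2) (at x0)"
      by (rule Lim_transform_eventually)
  qed
  show ?thesis
    by (rule eventually_mono[OF ev_ball]) (use RH_eq[OF a6 j] lim in \<open>auto simp: Rj_def x0_def\<close>)
qed

lemma key:
  assumes a6: "a \<ge> 6" and j: "j \<le> n"
  shows "2 * of_nat (d n) ^ (a - l) * c a l j n \<in> \<int>"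
proof -
  define x0 :: complex where "x0 = - of_nat j"
  have g: "good n x0 (HH a n j)" using HH_good[OF j] unfolding x0_def .
  then have an: "HH a n j analytic_on {x0}" unfolding good_def by blast
  have "c a l j n = (deriv ^^ (a - l)) (Rj a n j) x0 / fact (a - l)"
    unfolding c_def Dop_def x0_def of_nat_fact ..
  also have "(deriv ^^ (a - l)) (Rj a n j) x0 = (deriv ^^ (a - l)) (\<lambda>t. 1/2 * HH a n j t) x0"
    unfolding x0_def by (rule higher_deriv_cong_ev[OF Rj_eq[OF a6 j] refl])
  also have "\<dots> = 1/2 * (deriv ^^ (a - l)) (HH a n j) x0"
    by (rule higher_deriv_cmult'[OF an])
  finally have "2 * of_nat (d n) ^ (a - l) * c a l j n = of_nat (d n) ^ (a - l) * (deriv ^^ (a - l)) (HH a n j) x0 / fact (a - l)"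
    by simp
  also have "\<dots> \<in> \<int>" using g unfolding good_def by blast
  finally show ?thesis .
qed


lemma term_int:
  assumes a6: "a \<ge> 6" and l: "l \<le> a" and j: "j \<le> n" and k: "k \<in> {1..n}"
  shows "2 * of_nat (d n) ^ (a + 2) * (of_nat (l * (l + 1)) * c a l j n / (2 * of_nat k ^ (l + 2))) \<in> \<int>"
proof -
  obtain q where q: "d n = k * q" using dvd_d[OF k] by (elim dvdE)
  obtain h where h: "l * (l + 1) = 2 * h" by (metis dvd_def even_mult_iff even_plus_one_iff)
  have k0: "(of_nat k :: complex) \<noteq> 0" using k by auto
  have ea: "a + 2 = (a - l) + (l + 2)" using l by simp
  have "2 * of_nat (d n) ^ (a + 2) * (of_nat (l * (l + 1)) * c a l j n / (2 * of_nat k ^ (l + 2)))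
      = of_nat h * of_nat q ^ (l + 2) * (2 * of_nat (d n) ^ (a - l) * c a l j n)"
  proof -
    have "(of_nat (d n) :: complex) ^ (a + 2) = of_nat (d n) ^ (a - l) * (of_nat k ^ (l + 2) * of_nat q ^ (l + 2))"
      unfolding ea power_add by (simp add: q power_mult_distrib)
    then show ?thesis unfolding h using k0 by (simp add: field_simps)
  qed
  also have "\<dots> \<in> \<int>"
  proof -
    have "of_nat h * of_nat q ^ (l + 2) \<in> (\<int> :: complex set)" by simp
    from Ints_mult[OF this key[OF a6 j, of l]] show ?thesis .
  qed
  finally show ?thesis .
qed

theorem mainTheorem3:
  fixes a n :: nat
  assumes "a \<ge> 6" and "n \<ge> 1"
  shows "(\<forall>l\<in>{1..a}. int_poly (smult (2 * of_nat (d n) ^ (a - l)) (Pl a l n)))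
       \<and> int_poly (smult (2 * of_nat (d n) ^ (a + 2)) (P0 a n))"
proof (intro conjI ballI)
  fix l assume l: "l \<in> {1..a}"
  show "int_poly (smult (2 * of_nat (d n) ^ (a - l)) (Pl a l n))"
    unfolding int_poly_def
  proof
    fix i
    have "coeff (smult (2 * of_nat (d n) ^ (a - l)) (Pl a l n)) i
        = (\<Sum>j=0..n. (if j = i then 2 * of_nat (d n) ^ (a - l) * c a l j n else 0))"
      unfolding Pl_def coeff_smult coeff_sum coeff_monom sum_distrib_left
      by (intro sum.cong) auto
    also have "\<dots> \<in> \<int>" using key[OF assms(1)] by (intro Ints_sum) auto
    finally show "coeff (smult (2 * of_nat (d n) ^ (a - l)) (Pl a l n)) i \<in> \<int>" .
  qed
next
  show "int_poly (smult (2 * of_nat (d n) ^ (a + 2)) (P0 a n))"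
    unfolding int_poly_def
  proof
    fix i
    have "coeff (smult (2 * of_nat (d n) ^ (a + 2)) (P0 a n)) i
        = - (\<Sum>l=1..a. \<Sum>j=1..n. \<Sum>k=1..j. (if j - k = i then
             2 * of_nat (d n) ^ (a + 2) * (of_nat (l * (l + 1)) * c a l j n / (2 * of_nat k ^ (l + 2))) else 0))"
      unfolding P0_def coeff_smult coeff_minus coeff_sum coeff_monom mult_minus_right sum_distrib_left
      by (intro arg_cong[where f = uminus] sum.cong refl) auto
    also have "\<dots> \<in> \<int>" using term_int[OF assms(1)] by (intro Ints_minus Ints_sum) auto
    finally show "coeff (smult (2 * of_nat (d n) ^ (a + 2)) (P0 a n)) i \<in> \<int>" .
  qed
qed

end
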